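(* Let $K=\{x\in\mathbb{R}^m:Ax\succeq0\}$ with $A\in\mathcal{A}$, and assume $F$ is $K$-smooth with $\ell\in\mathrm{int}(K)$ and strongly $K$-convex with $\mu\in\mathrm{int}(K)$. Let the constants in the Barzilai-Borwein rule satisfy $0<\alpha_{\min}\le\min_{i\in[l]}\langle A_i,\mu\rangle$ and $\alpha_{\max}\ge\max_{i\in[l]}\langle A_i,\ell\rangle$, let $x^{-1}\ne x^0$, and let $\{x^k\}$ be generated by Algorithm 8 with $\gamma\in(0,1)$, assumed not to terminate ($d^k\neq0$ for all $k$). Then: (i) $A\mu\preceq\alpha^k\preceq A\ell$ for all $k$; (ii) $t_k\ge\min_{i\in[l]}\gamma\alpha_i^k/\langle A_i,\ell\rangle$; (iii) $\{x^k\}$ converges to an efficient solution $x^*$ of $\min_K F(x)$; (iv) $\|x^{k+1}-x^*\|\le\sqrt{1-\min_{i\in[l]}t_k\langle A_i,\mu\rangle/\alpha_i^k}\,\|x^k-x^*\|$ for all $k\ge0$.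
   Context: $K\subset\mathbb{R}^m$ is a pointed polyhedral cone with nonempty interior; $y\preceq_K y'$ iff $y'-y\in K$; on $\mathbb{R}^l$, $\preceq$ is componentwise. $\mathcal{A}:=\{A\in\mathbb{R}^{l\times m}:AK=\mathbb{R}^l_+\}$, $K=\{x:Ax\succeq0\}$; $A_i$ is the $i$-th row of $A$, $[l]=\{1,\dots,l\}$, $\Delta_l=\{\lambda\in\mathbb{R}^l_+:\sum_i\lambda_i=1\}$. $F:\mathbb{R}^n\to\mathbb{R}^m$ differentiable with Jacobian $JF$. Strongly $K$-convex with $\mu$: $JF(x)(y-x)+\tfrac12\|y-x\|^2\mu\preceq_K F(y)-F(x)$ $\forall x,y$; $K$-smooth with $\ell$: $F(y)-F(x)\preceq_K JF(x)(y-x)+\tfrac12\|y-x\|^2\ell$ $\forall x,y$. Efficient: no $x$ with $F(x)\preceq_K F(x^* )$, $F(x)\ne F(x^* )$. Barzilai-Borwein rule: with $s_{k-1}=x^k-x^{k-1}$ and $y_i^{k-1}$ the $i$-th row of $A(JF(x^k)-JF(x^{k-1}))$ (a vector in $\mathbb{R}^n$), $\alpha_i^k:=\max\{\alpha_{\min},\min\{\langle s_{k-1},y_i^{k-1}\rangle/\|s_{k-1}\|^2,\alpha_{\max}\}\}$ if $\langle s_{k-1},y_i^{k-1}\rangle>0$; $\alpha_i^k:=\max\{\alpha_{\min},\min\{\|y_i^{k-1}\|/\|s_{k-1}\|,\alpha_{\max}\}\}$ if $\langle s_{k-1},y_i^{k-1}\rangle<0$; $\alpha_i^k:=\alpha_{\min}$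 if it equals $0$. Algorithm 8 ($K$-Barzilai-Borwein descent method): given $x^0$, $x^{-1}$, for $k=0,1,\dots$: compute $\alpha^k$; with $\Lambda^k=\mathrm{diag}(1/\alpha_1^k,\dots,1/\alpha_l^k)$, $d^k:=\arg\min_{d}\max_{\lambda\in\Delta_l}\langle\lambda,\Lambda^kAJF(x^k)d\rangle+\tfrac12\|d\|^2$; if $d^k=0$ stop; otherwise $t_k:=\max\{\gamma^j:j\in\mathbb{N},\ A(F(x^k+\gamma^jd^k)-F(x^k))\preceq\gamma^j(AJF(x^k)d^k+\tfrac12\|d^k\|^2\alpha^k)\}$, $x^{k+1}:=x^k+t_kd^k$. *)

theory Defs
  imports "HOL-Analysis.Analysis"
begin

definition cone_le :: "'m set \<Rightarrow> 'm::real_vector \<Rightarrow> 'm \<Rightarrow> bool" where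
  "cone_le K y y' \<longleftrightarrow> y' - y \<in> K"

definition vec_le :: "real^'l \<Rightarrow> real^'l \<Rightarrow> bool" where
  "vec_le u v \<longleftrightarrow> (\<forall>i. u $ i \<le> v $ i)"

definition nonneg_orthant :: "(real^'l) set" where
  "nonneg_orthant = {z. \<forall>i. 0 \<le> z $ i}"

definition prob_simplex :: "(real^'l) set" where
  "prob_simplex = {lam. (\<forall>i. 0 \<le> lam $ i) \<and> (\<Sum>i\<in>UNIV. lam $ i) = 1}"

definition polyhedral_cone :: "real^'m^'l \<Rightarrow> (real^'m) set" where
  "polyhedral_cone A = {x. vec_le 0 (A *v x)}"

definition pointed_cone :: "(real^'m) set \<Rightarrow> bool" where
  "pointed_cone K \<longleftrightarrow> K \<inter> uminus ` K = {0}"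

definition strongly_K_convex ::
  "(real^'m) set \<Rightarrow> (real^'n \<Rightarrow> real^'m) \<Rightarrow> (real^'n \<Rightarrow> real^'n^'m) \<Rightarrow> real^'m \<Rightarrow> bool" where
  "strongly_K_convex K F JF mu \<longleftrightarrow>
     (\<forall>x y. cone_le K (JF x *v (y - x) + ((1/2) * (norm (y - x))\<^sup>2) *\<^sub>R mu) (F y - F x))"

definition K_smooth ::
  "(real^'m) set \<Rightarrow> (real^'n \<Rightarrow> real^'m) \<Rightarrow> (real^'n \<Rightarrow> real^'n^'m) \<Rightarrow> real^'m \<Rightarrow> bool" where
  "K_smooth K F JF ell \<longleftrightarrow>
     (\<forall>x y. cone_le K (F y - F x) (JF x *v (y - x) + ((1/2) * (norm (y - x))\<^sup>2) *\<^sub>R ell))"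

definition K_efficient :: "(real^'m) set \<Rightarrow> (real^'n \<Rightarrow> real^'m) \<Rightarrow> real^'n \<Rightarrow> bool" where
  "K_efficient K F xs \<longleftrightarrow> \<not> (\<exists>x. cone_le K (F x) (F xs) \<and> F x \<noteq> F xs)"

text \<open>Barzilai-Borwein stepsizes alpha^k computed from x^{k-1} = xp and x^k = xc.\<close>
definition bb_alpha ::
  "real \<Rightarrow> real \<Rightarrow> real^'m^'l \<Rightarrow> (real^'n \<Rightarrow> real^'n^'m) \<Rightarrow> real^'n \<Rightarrow> real^'n \<Rightarrow> real^'l" where
  "bb_alpha amin amax A JF xp xc =
     (\<chi> i. let s = xc - xp; y = (A ** (JF xc - JF xp)) $ i in
       if inner s y > 0 then max amin (min (inner s y / (norm s)\<^sup>2) amax)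
       else if inner s y < 0 then max amin (min (norm y / norm s) amax)
       else amin)"

definition dir_obj ::
  "real^'m^'l \<Rightarrow> real^'n^'m \<Rightarrow> real^'l \<Rightarrow> real^'n \<Rightarrow> real" where
  "dir_obj A J alpha d =
     (SUP lam\<in>prob_simplex. inner lam (\<chi> i. (A *v (J *v d)) $ i / alpha $ i))
       + (1/2) * (norm d)\<^sup>2"

definition bb_accept ::
  "real^'m^'l \<Rightarrow> (real^'n \<Rightarrow> real^'m) \<Rightarrow> (real^'n \<Rightarrow> real^'n^'m) \<Rightarrow> real \<Rightarrow> real^'l
     \<Rightarrow> real^'n \<Rightarrow> real^'n \<Rightarrow> nat \<Rightarrow> bool" where
  "bb_accept A F JF gamma alpha x d j \<longleftrightarrow>
     vec_le (A *v (F (x + gamma ^ j *\<^sub>R d) - F x))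
            (gamma ^ j *\<^sub>R (A *v (JF x *v d) + ((1/2) * (norm d)\<^sup>2) *\<^sub>R alpha))"

text \<open>t_k = max { gamma^j : j in N, test holds }; for 0 < gamma < 1 this is gamma^(least such j).\<close>
definition bb_stepsize ::
  "real^'m^'l \<Rightarrow> (real^'n \<Rightarrow> real^'m) \<Rightarrow> (real^'n \<Rightarrow> real^'n^'m) \<Rightarrow> real \<Rightarrow> real^'l
     \<Rightarrow> real^'n \<Rightarrow> real^'n \<Rightarrow> real" where
  "bb_stepsize A F JF gamma alpha x d = gamma ^ (LEAST j. bb_accept A F JF gamma alpha x d j)"

end

theory Submission
  imports Defs
begin
lemma eps_ge:
  fixes X Y :: real
  assumes h: "\<And>s. 0 < s \<Longrightarrow> s \<le> 1 \<Longrightarrow> 0 \<le> X + s * Y" and Y: "0 \<le> Y"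
  shows "0 \<le> X"
proof (rule ccontr)
  assume "\<not> 0 \<le> X"
  define s where "s = min 1 (- X / (2 * (Y + 1)))"
  have "0 < - X / (2 * (Y + 1))" using \<open>\<not> 0 \<le> X\<close> Y by (intro divide_pos_pos) auto
  hence s0: "0 < s" "s \<le> 1" by (auto simp: s_def)
  have "s * Y \<le> (- X / (2 * (Y + 1))) * Y" using Y unfolding s_def by (intro mult_right_mono) auto
  also have "\<dots> \<le> - X / 2" using Y \<open>\<not> 0 \<le> X\<close> by (simp add: field_simps)
  finally have "X + s * Y < 0" using \<open>\<not> 0 \<le> X\<close> by linarith
  with h[OF s0] show False by linarith
qed

lemma sup_simplex:
  fixes v :: "real^'l"
  shows "(SUP lam\<in>prob_simplex. inner lam v) = Max (range (\<lambda>i. v$i))"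
proof -
  have "Max (range (\<lambda>i. v$i)) \<in> range (\<lambda>i. v$i)" by (rule Max_in) auto
  then obtain i0 where i0: "v $ i0 = Max (range (\<lambda>i. v$i))" by (metis rangeE)
  have le: "inner lam v \<le> Max (range (\<lambda>i. v$i))" if "lam \<in> prob_simplex" for lam
  proof -
    have "inner lam v = (\<Sum>i\<in>UNIV. lam$i * v$i)" by (simp add: inner_vec_def)
    also have "\<dots> \<le> (\<Sum>i\<in>UNIV. lam$i * Max (range (\<lambda>i. v$i)))"
      using that by (intro sum_mono mult_left_mono) (auto simp: prob_simplex_def)
    also have "\<dots> = Max (range (\<lambda>i. v$i))" using that
      by (simp add: prob_simplex_def sum_distrib_right[symmetric])
    finally show ?thesis .
  qed
  have ax: "axis i0 1 \<in> prob_simplex"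
    by (simp add: prob_simplex_def axis_def sum.delta)
  have "inner (axis i0 (1::real)) v = v $ i0" by (simp add: inner_axis')
  hence "(SUP lam\<in>prob_simplex. inner lam v) = v $ i0"
    using ax le i0 by (intro cSup_eq_maximum) (auto intro!: image_eqI[where x="axis i0 1"])
  thus ?thesis using i0 by simp
qed

lemma var_ineq:
  fixes c :: "'l::finite \<Rightarrow> real^'n" and d e :: "real^'n"
  assumes opt: "\<And>e. Max (range (\<lambda>i. c i \<bullet> d)) + (1/2) * (norm d)\<^sup>2
                     \<le> Max (range (\<lambda>i. c i \<bullet> e)) + (1/2) * (norm e)\<^sup>2"
  shows "\<exists>i. Max (range (\<lambda>i. c i \<bullet> d)) - d \<bullet> e + (norm d)\<^sup>2 \<le> c i \<bullet> e"
proof -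
  define M where "M = Max (range (\<lambda>i. c i \<bullet> d))"
  have "Max (range (\<lambda>i. c i \<bullet> e)) \<in> range (\<lambda>i. c i \<bullet> e)" by (rule Max_in) auto
  then obtain j where j0: "Max (range (\<lambda>i. c i \<bullet> e)) = c j \<bullet> e" unfolding image_iff by blast
  note j = j0[symmetric]
  have Md: "c i \<bullet> d \<le> M" for i unfolding M_def by (rule Max_ge) auto
  have Me: "c i \<bullet> e \<le> c j \<bullet> e" for i unfolding j by (rule Max_ge) auto
  have key: "0 \<le> (c j \<bullet> e - M + d \<bullet> e - (norm d)\<^sup>2) + s * ((1/2) * (norm (e - d))\<^sup>2)"
    if s: "0 < s" "s \<le> 1" for s
  proof -
    have "Max (range (\<lambda>i. c i \<bullet> (d + s *\<^sub>R (e - d)))) \<le> (1 - s) * M + s * (c j \<bullet> e)"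
    proof (rule Max.boundedI)
      show "finite (range (\<lambda>i. c i \<bullet> (d + s *\<^sub>R (e - d))))" by simp
      show "range (\<lambda>i. c i \<bullet> (d + s *\<^sub>R (e - d))) \<noteq> {}" by simp
      fix a assume "a \<in> range (\<lambda>i. c i \<bullet> (d + s *\<^sub>R (e - d)))"
      then obtain i where a: "a = c i \<bullet> (d + s *\<^sub>R (e - d))" by auto
      have "a = (1 - s) * (c i \<bullet> d) + s * (c i \<bullet> e)" unfolding a
        by (simp add: inner_add_right inner_diff_right algebra_simps)
      also have "\<dots> \<le> (1 - s) * M + s * (c j \<bullet> e)"
        using s Md[of i] Me[of i] by (intro add_mono mult_left_mono) auto
      finally show "a \<le> (1 - s) * M + s * (c j \<bullet> e)" .
    qed
    moreover have "(norm (d + s *\<^sub>R (e - d)))\<^sup>2 = (norm d)\<^sup>2 + 2 * s * (d \<bullet> e - (norm d)\<^sup>2) + s^2 * (norm (e - d))\<^sup>2"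
      unfolding power2_norm_eq_inner by (simp add: inner_add_left inner_add_right inner_diff_left inner_diff_right algebra_simps power2_eq_square inner_commute)
    ultimately have "M + (1/2) * (norm d)\<^sup>2 \<le> (1 - s) * M + s * (c j \<bullet> e)
        + (1/2) * ((norm d)\<^sup>2 + 2 * s * (d \<bullet> e - (norm d)\<^sup>2) + s^2 * (norm (e - d))\<^sup>2)"
      using opt[of "d + s *\<^sub>R (e - d)"] unfolding M_def by (smt (verit))
    hence "0 \<le> s * ((c j \<bullet> e - M + d \<bullet> e - (norm d)\<^sup>2) + s * ((1/2) * (norm (e - d))\<^sup>2))"
      by (simp add: algebra_simps power2_eq_square)
    thus ?thesis using s by (simp add: zero_le_mult_iff)
  qed
  have "0 \<le> c j \<bullet> e - M + d \<bullet> e - (norm d)\<^sup>2"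
    by (rule eps_ge[OF key]) auto
  thus ?thesis unfolding M_def by (intro exI[of _ j]) linarith
qed

lemma rate_alg:
  fixes al M D dd G N m fz fx fxp t gd :: real
  assumes h1: "al * (M - D + dd) \<le> G"
    and h2: "G + (1/2) * N * m \<le> fz - fx"
    and h3: "fxp - fx \<le> t * (gd + (1/2) * dd * al)"
    and h4: "gd \<le> al * M"
    and h5: "fz \<le> fxp"
    and h6: "0 \<le> M + dd" "0 < t" "t \<le> 1" "0 < al" "0 \<le> dd"
  shows "N - 2 * t * D + t^2 * dd \<le> (1 - t * m / al) * N"
proof -
  have "al * (M - D + dd) \<le> t * (al * M + (1/2) * dd * al) - (1/2) * N * m"
  proof -
    have "t * gd \<le> t * (al * M)" using h4 h6 by (simp add: mult_left_mono)
    thus ?thesis using h1 h2 h3 h5 by (simp add: algebra_simps)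
  qed
  hence "al * (M - D + dd) \<le> al * (t * (M + (1/2) * dd) - (1/2) * N * m / al)"
    using h6 by (simp add: algebra_simps)
  hence D: "M - D + dd \<le> t * (M + (1/2) * dd) - (1/2) * N * m / al"
    using h6 by (simp add: mult_le_cancel_left_pos)
  have "N - 2 * t * D + t^2 * dd \<le> N - 2 * t * (M + dd - t * (M + (1/2) * dd) + (1/2) * N * m / al) + t^2 * dd"
    using D h6 by (simp add: mult_left_mono)
  also have "\<dots> = (1 - t * m / al) * N - 2 * t * (1 - t) * (M + dd)"
    by (simp add: algebra_simps power2_eq_square)
  also have "\<dots> \<le> (1 - t * m / al) * N"
    using h6 by (simp add: mult_nonneg_nonneg)
  finally show ?thesis .
qed

lemma row_mul: "(A ** B) $ i = (A $ i) v* (B::real^'n^'m)"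
  by (simp add: vec_eq_iff matrix_matrix_mult_def vector_matrix_mult_def mult.commute)

lemma comp_grad: "(A *v (J *v h)) $ i = ((A $ i) v* J) \<bullet> (h::real^'n)"
  by (simp add: matrix_vector_mul_component dot_lmul_matrix)

lemma norm_step_sq:
  fixes x z d :: "real^'n"
  shows "(norm (x + t *\<^sub>R d - z))\<^sup>2 = (norm (x - z))\<^sup>2 - 2 * t * (d \<bullet> (z - x)) + t^2 * (norm d)\<^sup>2"
  unfolding power2_norm_eq_inner
  by (simp add: inner_add_left inner_add_right inner_diff_left inner_diff_right algebra_simps power2_eq_square inner_commute)


theorem lemma5p3:
  fixes A :: "real^'m^'l"
    and F :: "real^'n \<Rightarrow> real^'m"
    and JF :: "real^'n \<Rightarrow> real^'n^'m"
    and ell mu :: "real^'m"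
    and amin amax gamma :: real
    and xm1 :: "real^'n"
    and x d :: "nat \<Rightarrow> real^'n"
    and alpha :: "nat \<Rightarrow> real^'l"
    and t :: "nat \<Rightarrow> real"
  defines "K \<equiv> polyhedral_cone A"
  assumes K_pointed: "pointed_cone K"
    and K_int: "interior K \<noteq> {}"
    and A_in: "(\<lambda>y. A *v y) ` K = nonneg_orthant"
    and F_deriv: "\<And>z. (F has_derivative (\<lambda>h. JF z *v h)) (at z)"
    and smooth: "K_smooth K F JF ell" and ell_int: "ell \<in> interior K"
    and sconv: "strongly_K_convex K F JF mu" and mu_int: "mu \<in> interior K"
    and amin_pos: "0 < amin"
    and amin_le: "\<And>i. amin \<le> (A *v mu) $ i"
    and amax_ge: "\<And>i. (A *v ell) $ i \<le> amax"
    and start: "xm1 \<noteq> x 0"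
    and gamma: "0 < gamma" "gamma < 1"
    and alpha_def: "\<And>k. alpha k = bb_alpha amin amax A JF (if k = 0 then xm1 else x (k - 1)) (x k)"
    and d_min: "\<And>k e. dir_obj A (JF (x k)) (alpha k) (d k) \<le> dir_obj A (JF (x k)) (alpha k) e"
    and d_nz: "\<And>k. d k \<noteq> 0"
    and t_def: "\<And>k. t k = bb_stepsize A F JF gamma (alpha k) (x k) (d k)"
    and x_next: "\<And>k. x (Suc k) = x k + t k *\<^sub>R d k"
  shows "(\<forall>k. vec_le (A *v mu) (alpha k) \<and> vec_le (alpha k) (A *v ell))
       \<and> (\<forall>k. t k \<ge> Min ((\<lambda>i. gamma * alpha k $ i / (A *v ell) $ i) ` UNIV))
       \<and> (\<exists>xs. x \<longlonglongrightarrow> xs \<and> K_efficient K F xs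
            \<and> (\<forall>k. norm (x (Suc k) - xs)
                   \<le> sqrt (1 - Min ((\<lambda>i. t k * (A *v mu) $ i / alpha k $ i) ` UNIV)) * norm (x k - xs)))"
proof -
  define f where "f i y = (A *v F y) $ i" for i y
  define g where "g i y = (A $ i) v* JF y" for i y
  define m where "m i = (A *v mu) $ i" for i
  define L where "L i = (A *v ell) $ i" for i
  have Kmem: "u \<in> K \<longleftrightarrow> (\<forall>i. 0 \<le> (A *v u) $ i)" for u
    by (simp add: K_def polyhedral_cone_def vec_le_def)
  have SC: "g i x \<bullet> (y - x) + (1/2) * (norm (y - x))\<^sup>2 * m i \<le> f i y - f i x" for i x y
  proof -
    have "F y - F x - (JF x *v (y - x) + ((1/2) * (norm (y - x))\<^sup>2) *\<^sub>R mu) \<in> K"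
      using sconv unfolding strongly_K_convex_def cone_le_def by blast
    hence "0 \<le> (A *v (F y - F x - (JF x *v (y - x) + ((1/2) * (norm (y - x))\<^sup>2) *\<^sub>R mu))) $ i"
      using Kmem by blast
    thus ?thesis by (simp add: f_def g_def m_def matrix_vector_mult_diff_distrib
          matrix_vector_right_distrib matrix_vector_mult_scaleR comp_grad inner_diff_right)
  qed
  have SM: "f i y - f i x \<le> g i x \<bullet> (y - x) + (1/2) * (norm (y - x))\<^sup>2 * L i" for i x y
  proof -
    have "JF x *v (y - x) + ((1/2) * (norm (y - x))\<^sup>2) *\<^sub>R ell - (F y - F x) \<in> K"
      using smooth unfolding K_smooth_def cone_le_def by blast
    hence "0 \<le> (A *v (JF x *v (y - x) + ((1/2) * (norm (y - x))\<^sup>2) *\<^sub>R ell - (F y - F x))) $ i"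
      using Kmem by blast
    thus ?thesis by (simp add: f_def g_def L_def matrix_vector_mult_diff_distrib
          matrix_vector_right_distrib matrix_vector_mult_scaleR comp_grad inner_diff_right)
  qed
  have mpos: "0 < m i" for i using amin_pos amin_le[of i] by (simp add: m_def)
  have ab_gen: "m i \<le> bb_alpha amin amax A JF xp xc $ i \<and> bb_alpha amin amax A JF xp xc $ i \<le> L i
       \<and> m i \<le> L i" if "xp \<noteq> xc" for xp xc i
  proof -
    define s where "s = xc - xp"
    define q where "q = s \<bullet> (g i xc - g i xp)"
    have s0: "0 < (norm s)\<^sup>2" using that by (simp add: s_def)
    have n1: "norm (xp - xc) = norm s" by (simp add: s_def norm_minus_commute)
    have e1: "g i xc \<bullet> (xp - xc) = - (s \<bullet> g i xc)" by (simp add: s_def inner_commute inner_diff_left inner_diff_right)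
    have e2: "g i xp \<bullet> (xc - xp) = s \<bullet> g i xp" by (simp add: s_def inner_commute)
    have qe: "q = s \<bullet> g i xc - s \<bullet> g i xp" by (simp add: q_def inner_diff_right)
    have lo: "m i * (norm s)\<^sup>2 \<le> q"
      using SC[of i xp xc] SC[of i xc xp] inner_commute[of "g i xp" s] unfolding n1 e1 e2 qe s_def[symmetric] by (simp add: algebra_simps)
    have hi: "q \<le> L i * (norm s)\<^sup>2"
      using SM[of i xp xc] SM[of i xc xp] inner_commute[of "g i xp" s] unfolding n1 e1 e2 qe s_def[symmetric] by (simp add: algebra_simps)
    have b1: "m i \<le> q / (norm s)\<^sup>2" using lo s0 by (simp add: field_simps)
    have b2: "q / (norm s)\<^sup>2 \<le> L i" using hi s0 by (simp add: field_simps)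
    have qpos: "0 < q" using lo s0 mpos[of i] by (smt (verit) mult_pos_pos)
    have y: "(A ** (JF xc - JF xp)) $ i = g i xc - g i xp"
      by (simp add: row_mul g_def vector_matrix_mult_diff_rdistrib)
    have "bb_alpha amin amax A JF xp xc $ i = q / (norm s)\<^sup>2"
      unfolding bb_alpha_def Let_def using qpos b1 b2 amin_le[of i] amax_ge[of i]
      by (simp add: y flip: s_def q_def m_def L_def)
    thus ?thesis using b1 b2 by simp
  qed
  have mL: "m i \<le> L i" for i using ab_gen[OF start] by blast
  have Lpos: "0 < L i" for i using mL[of i] mpos[of i] by simp
  have tpos: "0 < t k" for k using t_def gamma by (simp add: bb_stepsize_def)
  have xne: "(if k = 0 then xm1 else x (k - 1)) \<noteq> x k" for k
  proof (cases k)
    case 0 thus ?thesis using start by simp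
  next
    case (Suc j)
    have "x (Suc j) \<noteq> x j" using x_next[of j] tpos[of j] d_nz[of j] by simp
    thus ?thesis using Suc by simp
  qed
  have abnd: "m i \<le> alpha k $ i \<and> alpha k $ i \<le> L i" for k i
    using ab_gen[OF xne[of k]] alpha_def[of k] by simp
  have apos: "0 < alpha k $ i" for k i using abnd[of i k] mpos[of i] by linarith
  define c where "c k i = (1 / alpha k $ i) *\<^sub>R g i (x k)" for k i
  have dobj: "dir_obj A (JF (x k)) (alpha k) e = Max (range (\<lambda>i. c k i \<bullet> e)) + (1/2) * (norm e)\<^sup>2" for k e
    unfolding dir_obj_def sup_simplex by (simp add: c_def comp_grad g_def)
  have opt: "Max (range (\<lambda>i. c k i \<bullet> d k)) + (1/2) * (norm (d k))\<^sup>2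
      \<le> Max (range (\<lambda>i. c k i \<bullet> e)) + (1/2) * (norm e)\<^sup>2" for k e
    using d_min[of k e] by (simp add: dobj)
  have var: "\<exists>i. Max (range (\<lambda>i. c k i \<bullet> d k)) - d k \<bullet> e + (norm (d k))\<^sup>2 \<le> c k i \<bullet> e" for k e
    by (rule var_ineq[OF opt])
  have Mge: "c k i \<bullet> d k \<le> Max (range (\<lambda>i. c k i \<bullet> d k))" for k i by (rule Max_ge) auto
  have Mneg: "Max (range (\<lambda>i. c k i \<bullet> d k)) + (1/2) * (norm (d k))\<^sup>2 \<le> 0" for k
    using opt[of k 0] by simp
  have Mlow: "0 \<le> Max (range (\<lambda>i. c k i \<bullet> d k)) + (norm (d k))\<^sup>2" for k
  proof -
    obtain i where i: "Max (range (\<lambda>i. c k i \<bullet> d k)) - d k \<bullet> (2 *\<^sub>R d k) + (norm (d k))\<^sup>2 \<le> c k i \<bullet> (2 *\<^sub>R d k)"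
      using var[of k "2 *\<^sub>R d k"] by blast
    have "d k \<bullet> (2 *\<^sub>R d k) = 2 * (norm (d k))\<^sup>2" by (simp add: power2_norm_eq_inner)
    moreover have "c k i \<bullet> (2 *\<^sub>R d k) = 2 * (c k i \<bullet> d k)" by simp
    ultimately show ?thesis using i Mge[of k i] by linarith
  qed
  have cd: "c k i \<bullet> e = (g i (x k) \<bullet> e) / alpha k $ i" for k i e by (simp add: c_def)
  have desc: "g i (x k) \<bullet> d k + (1/2) * (norm (d k))\<^sup>2 * alpha k $ i \<le> 0" for k i
  proof -
    have "(g i (x k) \<bullet> d k) / alpha k $ i + (1/2) * (norm (d k))\<^sup>2 \<le> 0"
      using Mge[of k i] Mneg[of k] unfolding cd by linarith
    hence "alpha k $ i * ((g i (x k) \<bullet> d k) / alpha k $ i + (1/2) * (norm (d k))\<^sup>2) \<le> 0"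
      using apos[of k i] by (simp add: mult_nonneg_nonpos)
    moreover have "alpha k $ i * ((g i (x k) \<bullet> d k) / alpha k $ i + (1/2) * (norm (d k))\<^sup>2)
       = g i (x k) \<bullet> d k + (1/2) * (norm (d k))\<^sup>2 * alpha k $ i"
      using apos[of k i] by (simp add: distrib_left mult.commute)
    ultimately show ?thesis by linarith
  qed
  have acc_iff: "bb_accept A F JF gamma (alpha k) (x k) (d k) j \<longleftrightarrow>
      (\<forall>i. f i (x k + gamma^j *\<^sub>R d k) - f i (x k)
            \<le> gamma^j * (g i (x k) \<bullet> d k + (1/2) * (norm (d k))\<^sup>2 * alpha k $ i))" for k j
    unfolding bb_accept_def vec_le_def
    by (simp add: f_def g_def comp_grad matrix_vector_mult_diff_distrib matrix_vector_right_distrib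
        matrix_vector_mult_scaleR)
  have armijo: "f i (x k + \<tau> *\<^sub>R d k) - f i (x k) \<le> \<tau> * (g i (x k) \<bullet> d k + (1/2) * (norm (d k))\<^sup>2 * alpha k $ i)"
    if "0 < \<tau>" "\<tau> * L i \<le> alpha k $ i" for \<tau> k i
  proof -
    have "f i (x k + \<tau> *\<^sub>R d k) - f i (x k) \<le> \<tau> * (g i (x k) \<bullet> d k) + (1/2) * \<tau>^2 * (norm (d k))\<^sup>2 * L i"
      using SM[of i "x k + \<tau> *\<^sub>R d k" "x k"] that by (simp add: power_mult_distrib)
    also have "(1/2) * \<tau>^2 * (norm (d k))\<^sup>2 * L i = (1/2) * \<tau> * (norm (d k))\<^sup>2 * (\<tau> * L i)"
      by (simp add: power2_eq_square)
    also have "\<dots> \<le> (1/2) * \<tau> * (norm (d k))\<^sup>2 * alpha k $ i"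
      using that by (intro mult_left_mono) auto
    finally show ?thesis by (simp add: algebra_simps)
  qed
  have step: "0 < t k \<and> t k \<le> 1
     \<and> (\<forall>i. f i (x (Suc k)) - f i (x k) \<le> t k * (g i (x k) \<bullet> d k + (1/2) * (norm (d k))\<^sup>2 * alpha k $ i))
     \<and> Min ((\<lambda>i. gamma * alpha k $ i / L i) ` UNIV) \<le> t k" for k
  proof -
    define \<rho> where "\<rho> = Min (range (\<lambda>i. alpha k $ i / L i))"
    have "\<rho> \<in> range (\<lambda>i. alpha k $ i / L i)" unfolding \<rho>_def by (rule Min_in) auto
    then obtain i0 where i0: "\<rho> = alpha k $ i0 / L i0" unfolding image_iff by blast
    have \<rho>pos: "0 < \<rho>" using i0 apos[of k i0] Lpos[of i0] by simp
    have \<rho>le: "\<rho> \<le> alpha k $ i / L i" for i unfolding \<rho>_def by (rule Min_le) auto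
    have \<rho>1: "\<rho> \<le> 1" using i0 abnd[of i0 k] Lpos[of i0] by simp
    have accj: "bb_accept A F JF gamma (alpha k) (x k) (d k) j" if "gamma^j \<le> \<rho>" for j
      unfolding acc_iff
    proof
      fix i
      have "gamma^j * L i \<le> \<rho> * L i" using that Lpos[of i] by (simp add: mult_right_mono)
      also have "\<dots> \<le> alpha k $ i" using \<rho>le[of i] Lpos[of i] by (simp add: field_simps)
      finally show "f i (x k + gamma^j *\<^sub>R d k) - f i (x k)
            \<le> gamma^j * (g i (x k) \<bullet> d k + (1/2) * (norm (d k))\<^sup>2 * alpha k $ i)"
        using gamma by (intro armijo) auto
    qed
    obtain j1 where "gamma^j1 < \<rho>" using real_arch_pow_inv[OF \<rho>pos gamma(2)] by blast
    hence ex: "bb_accept A F JF gamma (alpha k) (x k) (d k) j1" using accj by simp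
    define j0 where "j0 = (LEAST j. bb_accept A F JF gamma (alpha k) (x k) (d k) j)"
    have acc0: "bb_accept A F JF gamma (alpha k) (x k) (d k) j0"
      unfolding j0_def using ex by (rule LeastI)
    have tk: "t k = gamma ^ j0" by (simp add: t_def bb_stepsize_def j0_def)
    have minle: "Min ((\<lambda>i. gamma * alpha k $ i / L i) ` UNIV) \<le> gamma * \<rho>"
    proof -
      have "Min ((\<lambda>i. gamma * alpha k $ i / L i) ` UNIV) \<le> gamma * alpha k $ i0 / L i0"
        by (rule Min_le) auto
      thus ?thesis using i0 by simp
    qed
    have lb: "gamma * \<rho> \<le> t k"
    proof (cases j0)
      case 0
      thus ?thesis using tk gamma \<rho>1 \<rho>pos mult_le_one[of gamma \<rho>] by simp
    next
      case (Suc j')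
      have "\<not> bb_accept A F JF gamma (alpha k) (x k) (d k) j'"
        unfolding j0_def using Suc j0_def not_less_Least[of j' "\<lambda>j. bb_accept A F JF gamma (alpha k) (x k) (d k) j"]
        by simp
      hence "\<rho> < gamma ^ j'" using accj[of j'] by linarith
      thus ?thesis using tk Suc gamma by simp
    qed
    have t1: "t k \<le> 1" using tk gamma by (simp add: power_le_one)
    show ?thesis using tpos[of k] t1 lb minle acc0 x_next[of k] tk unfolding acc_iff by simp
  qed
  have fdec: "f i (x (Suc k)) \<le> f i (x k)" for i k
  proof -
    have "t k * (g i (x k) \<bullet> d k + (1/2) * (norm (d k))\<^sup>2 * alpha k $ i) \<le> 0"
      using step[of k] desc[of i k] by (simp add: mult_nonneg_nonpos)
    moreover have "f i (x (Suc k)) - f i (x k) \<le> t k * (g i (x k) \<bullet> d k + (1/2) * (norm (d k))\<^sup>2 * alpha k $ i)"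
      using step[of k] by blast
    ultimately show ?thesis by linarith
  qed
  have fmono: "f i (x n) \<le> f i (x k)" if "k \<le> n" for i k n
    using that
  proof (induction n rule: dec_induct)
    case base thus ?case by simp
  next
    case (step n) thus ?case using fdec[of i n] by linarith
  qed
  have rate: "\<exists>i. (norm (x (Suc k) - z))\<^sup>2 \<le> (1 - t k * m i / alpha k $ i) * (norm (x k - z))\<^sup>2"
    if hz: "\<forall>i. f i z \<le> f i (x (Suc k))" for k z
  proof -
    obtain i where i: "Max (range (\<lambda>i. c k i \<bullet> d k)) - d k \<bullet> (z - x k) + (norm (d k))\<^sup>2 \<le> c k i \<bullet> (z - x k)"
      using var[of k "z - x k"] by blast
    define M where "M = Max (range (\<lambda>i. c k i \<bullet> d k))"
    have h1: "alpha k $ i * (M - d k \<bullet> (z - x k) + (norm (d k))\<^sup>2) \<le> g i (x k) \<bullet> (z - x k)"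
    proof -
      have "alpha k $ i * (M - d k \<bullet> (z - x k) + (norm (d k))\<^sup>2) \<le> alpha k $ i * ((g i (x k) \<bullet> (z - x k)) / alpha k $ i)"
        using i apos[of k i] unfolding cd M_def by (intro mult_left_mono) auto
      thus ?thesis using apos[of k i] by simp
    qed
    have h4: "g i (x k) \<bullet> d k \<le> alpha k $ i * M"
    proof -
      have "(g i (x k) \<bullet> d k) / alpha k $ i \<le> M" using Mge[of k i] unfolding cd M_def .
      thus ?thesis using apos[of k i] by (simp add: field_simps)
    qed
    have r: "(norm (z - x k))\<^sup>2 - 2 * t k * (d k \<bullet> (z - x k)) + (t k)^2 * (norm (d k))\<^sup>2
        \<le> (1 - t k * m i / alpha k $ i) * (norm (z - x k))\<^sup>2"
      by (rule rate_alg[OF h1 SC[of i "x k" z] conjunct1[OF conjunct2[OF conjunct2[OF step[of k]]], rule_format, of i, unfolded x_next[symmetric]] h4 hz[rule_format, of i]])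
        (use Mlow[of k] step[of k] apos[of k i] in \<open>auto simp: M_def\<close>)
    have "(norm (x (Suc k) - z))\<^sup>2 = (norm (x k - z))\<^sup>2 - 2 * t k * (d k \<bullet> (z - x k)) + (t k)^2 * (norm (d k))\<^sup>2"
      unfolding x_next by (rule norm_step_sq)
    thus ?thesis using r by (intro exI[of _ i]) (simp add: norm_minus_commute)
  qed
  define Mn where "Mn k = Min ((\<lambda>i. t k * m i / alpha k $ i) ` UNIV)" for k
  have Mn_le: "Mn k \<le> t k * m i / alpha k $ i" for k i unfolding Mn_def by (rule Min_le) auto
  have Mn1: "Mn k \<le> 1" for k
  proof -
    have "m undefined / alpha k $ undefined \<le> 1" using abnd[of undefined k] apos[of k undefined] by simp
    hence "t k * (m undefined / alpha k $ undefined) \<le> 1" using step[of k] mpos[of undefined] apos[of k undefined]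
      by (intro mult_le_one) auto
    thus ?thesis using Mn_le[of k undefined] by simp
  qed
  have rate2: "(norm (x (Suc k) - z))\<^sup>2 \<le> (1 - Mn k) * (norm (x k - z))\<^sup>2"
    if hz2: "\<forall>i. f i z \<le> f i (x (Suc k))" for k z
  proof -
    obtain i where "(norm (x (Suc k) - z))\<^sup>2 \<le> (1 - t k * m i / alpha k $ i) * (norm (x k - z))\<^sup>2"
      using rate[OF hz2] by blast
    moreover have "(1 - t k * m i / alpha k $ i) * (norm (x k - z))\<^sup>2 \<le> (1 - Mn k) * (norm (x k - z))\<^sup>2"
      using Mn_le[of k i] by (intro mult_right_mono) auto
    ultimately show ?thesis by linarith
  qed
  define c0 where "c0 = Min (range (\<lambda>i. m i / L i))"
  have c0le: "c0 \<le> m i / L i" for i unfolding c0_def by (rule Min_le) auto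
  have c0pos: "0 < c0"
  proof -
    have "c0 \<in> range (\<lambda>i. m i / L i)" unfolding c0_def by (rule Min_in) auto
    then obtain i where "c0 = m i / L i" by blast
    thus ?thesis using mpos[of i] Lpos[of i] by simp
  qed
  have c01: "c0 \<le> 1"
  proof -
    have "m undefined / L undefined \<le> 1" using mL[of undefined] Lpos[of undefined] by simp
    thus ?thesis using c0le[of undefined] by linarith
  qed
  define q where "q = gamma * c0 * c0"
  have q: "0 < q" "q \<le> 1" using gamma c0pos c01 by (auto simp: q_def mult_le_one)
  have Mnq: "q \<le> Mn k" for k
  proof -
    have tk: "gamma * c0 \<le> t k"
    proof -
      have "gamma * c0 \<le> Min ((\<lambda>i. gamma * alpha k $ i / L i) ` UNIV)"
      proof (subst Min_ge_iff, simp, simp, intro ballI)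
        fix a assume "a \<in> range (\<lambda>i. gamma * alpha k $ i / L i)"
        then obtain i where a: "a = gamma * alpha k $ i / L i" by blast
        have "c0 \<le> alpha k $ i / L i"
          using c0le[of i] abnd[of i k] Lpos[of i] by (smt (verit) divide_right_mono)
        hence "gamma * c0 \<le> gamma * (alpha k $ i / L i)" using gamma by (intro mult_left_mono) auto
        thus "gamma * c0 \<le> a" unfolding a by simp
      qed
      thus ?thesis using step[of k] by linarith
    qed
    show ?thesis unfolding Mn_def
    proof (subst Min_ge_iff, simp, simp, intro ballI)
      fix a assume "a \<in> range (\<lambda>i. t k * m i / alpha k $ i)"
      then obtain i where a: "a = t k * m i / alpha k $ i" by blast
      have "c0 \<le> m i / alpha k $ i"
      proof -
        have "m i / L i \<le> m i / alpha k $ i"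
          using abnd[of i k] mpos[of i] apos[of k i] by (intro divide_left_mono) auto
        thus ?thesis using c0le[of i] by linarith
      qed
      hence "gamma * c0 * c0 \<le> t k * (m i / alpha k $ i)"
        using tk gamma c0pos tpos[of k] by (intro mult_mono) auto
      thus "q \<le> a" unfolding a q_def by simp
    qed
  qed
  have conv: "x \<longlonglongrightarrow> w" if hw: "\<forall>k i. f i w \<le> f i (x k)" for w
  proof -
    have st: "(norm (x (Suc k) - w))\<^sup>2 \<le> (1 - q) * (norm (x k - w))\<^sup>2" for k
    proof -
      have "(norm (x (Suc k) - w))\<^sup>2 \<le> (1 - Mn k) * (norm (x k - w))\<^sup>2" using rate2 hw by blast
      also have "\<dots> \<le> (1 - q) * (norm (x k - w))\<^sup>2" using Mnq[of k] by (intro mult_right_mono) auto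
      finally show ?thesis .
    qed
    have pw: "(norm (x k - w))\<^sup>2 \<le> (1 - q)^k * (norm (x 0 - w))\<^sup>2" for k
    proof (induction k)
      case 0 thus ?case by simp
    next
      case (Suc k)
      have "(norm (x (Suc k) - w))\<^sup>2 \<le> (1 - q) * (norm (x k - w))\<^sup>2" by (rule st)
      also have "\<dots> \<le> (1 - q) * ((1 - q)^k * (norm (x 0 - w))\<^sup>2)"
        using Suc q by (intro mult_left_mono) auto
      finally show ?case by simp
    qed
    have lim0: "(\<lambda>k. sqrt ((1 - q)^k * (norm (x 0 - w))\<^sup>2)) \<longlonglongrightarrow> 0"
    proof -
      have "(\<lambda>k. (1 - q)^k) \<longlonglongrightarrow> 0" using q by (intro LIMSEQ_power_zero) auto
      hence "(\<lambda>k. (1 - q)^k * (norm (x 0 - w))\<^sup>2) \<longlonglongrightarrow> 0 * (norm (x 0 - w))\<^sup>2"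
        by (intro tendsto_mult) auto
      hence "(\<lambda>k. sqrt ((1 - q)^k * (norm (x 0 - w))\<^sup>2)) \<longlonglongrightarrow> sqrt (0 * (norm (x 0 - w))\<^sup>2)"
        by (rule tendsto_real_sqrt)
      thus ?thesis by simp
    qed
    have "(\<lambda>k. x k - w) \<longlonglongrightarrow> 0"
    proof (rule Lim_null_comparison[OF _ lim0], rule always_eventually, rule allI)
      fix k
      have "norm (x k - w) = sqrt ((norm (x k - w))\<^sup>2)" by simp
      also have "\<dots> \<le> sqrt ((1 - q)^k * (norm (x 0 - w))\<^sup>2)" using pw[of k] by (rule real_sqrt_le_mono)
      finally show "norm (x k - w) \<le> sqrt ((1 - q)^k * (norm (x 0 - w))\<^sup>2)" .
    qed
    thus ?thesis by (rule LIM_zero_cancel)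
  qed
  obtain w where hw: "\<forall>k i. f i w \<le> f i (x k)"
  proof -
    define i0 :: 'l where "i0 = undefined"
    define R where "R = 2 * norm (g i0 (x 0)) / m i0"
    have inb: "x k \<in> cball (x 0) R" for k
    proof -
      define v where "v = x k - x 0"
      have "g i0 (x 0) \<bullet> v + (1/2) * (norm v)\<^sup>2 * m i0 \<le> f i0 (x k) - f i0 (x 0)"
        using SC[of i0 "x 0" "x k"] by (simp add: v_def)
      also have "\<dots> \<le> 0" using fmono[of 0 k i0] by simp
      finally have "(1/2) * (norm v)\<^sup>2 * m i0 \<le> - (g i0 (x 0) \<bullet> v)" by linarith
      also have "\<dots> \<le> norm (g i0 (x 0)) * norm v"
        using norm_cauchy_schwarz[of "- g i0 (x 0)" v] by simp
      finally have h: "(1/2) * (norm v)\<^sup>2 * m i0 \<le> norm (g i0 (x 0)) * norm v" .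
      have "norm v \<le> R"
      proof (cases "norm v = 0")
        case True thus ?thesis using mpos[of i0] by (simp add: R_def)
      next
        case False
        hence nv: "0 < norm v" by simp
        have "norm v * ((1/2) * norm v * m i0) \<le> norm v * norm (g i0 (x 0))"
          using h by (simp add: power2_eq_square algebra_simps)
        hence "(1/2) * norm v * m i0 \<le> norm (g i0 (x 0))" using nv by simp
        thus ?thesis using mpos[of i0] by (simp add: R_def field_simps)
      qed
      thus ?thesis by (simp add: v_def dist_norm norm_minus_commute)
    qed
    have "seq_compact (cball (x 0) R)" by (rule compact_imp_seq_compact) simp
    then obtain w r where w: "strict_mono r" "(x \<circ> r) \<longlonglongrightarrow> w"
      using inb unfolding seq_compact_def by blast
    have "f i w \<le> f i (x k)" for k i
    proof -
      have "isCont F w" using F_deriv[of w] by (rule has_derivative_continuous)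
      hence "(\<lambda>n. F ((x \<circ> r) n)) \<longlonglongrightarrow> F w" using w(2) by (rule isCont_tendsto_compose)
      hence "(\<lambda>n. A $ i \<bullet> F ((x \<circ> r) n)) \<longlonglongrightarrow> A $ i \<bullet> F w" by (intro tendsto_intros)
      hence lim: "(\<lambda>n. f i (x (r n))) \<longlonglongrightarrow> f i w" by (simp add: f_def matrix_vector_mul_component)
      show ?thesis
      proof (rule LIMSEQ_le_const2[OF lim], intro exI allI impI)
        fix n assume "k \<le> n"
        hence "k \<le> r n" using seq_suble[OF w(1), of n] by linarith
        thus "f i (x (r n)) \<le> f i (x k)" by (rule fmono)
      qed
    qed
    thus ?thesis using that by blast
  qed
  have xw: "x \<longlonglongrightarrow> w" using conv hw by blast
  have eff: "K_efficient K F w"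
    unfolding K_efficient_def
  proof
    assume "\<exists>y. cone_le K (F y) (F w) \<and> F y \<noteq> F w"
    then obtain y where y: "cone_le K (F y) (F w)" "F y \<noteq> F w" by blast
    have "0 \<le> (A *v (F w - F y)) $ i" for i using y(1) Kmem unfolding cone_le_def by blast
    hence "f i y \<le> f i w" for i by (simp add: f_def matrix_vector_mult_diff_distrib)
    hence "\<forall>k i. f i y \<le> f i (x k)" using hw by (meson order_trans)
    hence "x \<longlonglongrightarrow> y" using conv by blast
    hence "y = w" using xw LIMSEQ_unique by blast
    thus False using y(2) by simp
  qed
  have part4: "norm (x (Suc k) - w) \<le> sqrt (1 - Mn k) * norm (x k - w)" for k
  proof -
    have "\<forall>i. f i w \<le> f i (x (Suc k))" using hw by blast
    hence "(norm (x (Suc k) - w))\<^sup>2 \<le> (1 - Mn k) * (norm (x k - w))\<^sup>2" by (rule rate2)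
    hence "sqrt ((norm (x (Suc k) - w))\<^sup>2) \<le> sqrt ((1 - Mn k) * (norm (x k - w))\<^sup>2)"
      by (rule real_sqrt_le_mono)
    thus ?thesis by (simp add: real_sqrt_mult)
  qed
  have part1: "vec_le (A *v mu) (alpha k) \<and> vec_le (alpha k) (A *v ell)" for k
    using abnd by (simp add: vec_le_def m_def L_def)
  have part2: "t k \<ge> Min ((\<lambda>i. gamma * alpha k $ i / (A *v ell) $ i) ` UNIV)" for k
    using step[of k] by (simp add: L_def)
  show ?thesis using part1 part2 xw eff part4 unfolding Mn_def m_def by blast
qed

end
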